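(* Fix $\delta\in(0,1)$ and $\gamma'>0$. For all sufficiently large $n$ the following holds. Let $G=(X\cup Y,E)$ be a $d$-regular bipartite graph on $2n$ vertices with $d=\lfloor\delta n\rfloor$, let $t\le\log^4 n$, let $A\in\mathcal G(w,t)$, and let $(S,T)$ be a $\gamma'$-container for $A$. Then $|S|\le |T|$.
   Context: $N(S)$ is the neighbourhood of $S$; $d_S(v)$ is the number of neighbours of $v$ in $S$. A polymer is a subset of $X$ connected in the square $G^2$ of $G$. The closure of $A\subseteq X$ is $[A]:=\{x\in X: N(x)\subseteq N(A)\}$. $\mathcal G(w,t):=\{A\subseteq X \text{ polymer} : |N(A)|=w,\ |N(A)|-|[A]|=t\}$. For $A\subseteq X$ write $W=N(A)$ and $W_s=\{y\in W: d_A(y)\ge s\}$. A pair $(S,T)\in 2^X\times 2^Y$ is a $\gamma'$-container for $A$ (with $t=|N(A)|-|[A]|$) if (i) $S\supseteq[A]$ and $W_{d/2}\subseteq T\subseteq W$; (ii) $d_{Y\setminus T}(v)\le\gamma' t$ for every $v\in S$; (iii) $d_S(v)\le \gamma' t$ for every $v\in Y\setminus T$. *)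

theory Defs
  imports Complex_Main
begin

definition bipartite_graph :: "'a set \<Rightarrow> 'a set \<Rightarrow> ('a \<Rightarrow> 'a \<Rightarrow> bool) \<Rightarrow> bool" where
  "bipartite_graph X Y E \<longleftrightarrow> finite X \<and> finite Y \<and> X \<inter> Y = {} \<and>
     (\<forall>u v. E u v \<longrightarrow> E v u) \<and>
     (\<forall>u v. E u v \<longrightarrow> (u \<in> X \<and> v \<in> Y) \<or> (u \<in> Y \<and> v \<in> X))"

definition nbhd :: "('a \<Rightarrow> 'a \<Rightarrow> bool) \<Rightarrow> 'a set \<Rightarrow> 'a set" where
  "nbhd E S = {v. \<exists>u\<in>S. E u v}"

definition deg_in :: "('a \<Rightarrow> 'a \<Rightarrow> bool) \<Rightarrow> 'a set \<Rightarrow> 'a \<Rightarrow> nat" where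
  "deg_in E S v = card {u\<in>S. E v u}"

definition regular :: "'a set \<Rightarrow> 'a set \<Rightarrow> ('a \<Rightarrow> 'a \<Rightarrow> bool) \<Rightarrow> nat \<Rightarrow> bool" where
  "regular X Y E d \<longleftrightarrow> (\<forall>v\<in>X \<union> Y. card (nbhd E {v}) = d)"

definition sq_adj :: "('a \<Rightarrow> 'a \<Rightarrow> bool) \<Rightarrow> 'a \<Rightarrow> 'a \<Rightarrow> bool" where
  "sq_adj E u v \<longleftrightarrow> u \<noteq> v \<and> (E u v \<or> (\<exists>z. E u z \<and> E z v))"

definition polymer :: "'a set \<Rightarrow> ('a \<Rightarrow> 'a \<Rightarrow> bool) \<Rightarrow> 'a set \<Rightarrow> bool" where
  "polymer X E A \<longleftrightarrow> A \<subseteq> X \<and> A \<noteq> {} \<and>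
     (\<forall>u\<in>A. \<forall>v\<in>A. (\<lambda>x y. x \<in> A \<and> y \<in> A \<and> sq_adj E x y)\<^sup>*\<^sup>* u v)"

definition closure_set :: "'a set \<Rightarrow> ('a \<Rightarrow> 'a \<Rightarrow> bool) \<Rightarrow> 'a set \<Rightarrow> 'a set" where
  "closure_set X E A = {x\<in>X. nbhd E {x} \<subseteq> nbhd E A}"

definition polyfam :: "'a set \<Rightarrow> ('a \<Rightarrow> 'a \<Rightarrow> bool) \<Rightarrow> nat \<Rightarrow> int \<Rightarrow> 'a set set" where
  "polyfam X E w t = {A. polymer X E A \<and> card (nbhd E A) = w \<and>
      int (card (nbhd E A)) - int (card (closure_set X E A)) = t}"

definition W_s :: "('a \<Rightarrow> 'a \<Rightarrow> bool) \<Rightarrow> 'a set \<Rightarrow> real \<Rightarrow> 'a set" where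
  "W_s E A s = {y\<in>nbhd E A. real (deg_in E A y) \<ge> s}"

definition container ::
  "'a set \<Rightarrow> 'a set \<Rightarrow> ('a \<Rightarrow> 'a \<Rightarrow> bool) \<Rightarrow> nat \<Rightarrow> real \<Rightarrow> 'a set \<Rightarrow> 'a set \<Rightarrow> 'a set \<Rightarrow> bool" where
  "container X Y E d \<gamma> A S T \<longleftrightarrow>
     (let t = real_of_int (int (card (nbhd E A)) - int (card (closure_set X E A))) in
      S \<subseteq> X \<and> T \<subseteq> Y \<and>
      closure_set X E A \<subseteq> S \<and> W_s E A (real d / 2) \<subseteq> T \<and> T \<subseteq> nbhd E A \<and>
      (\<forall>v\<in>S. real (deg_in E (Y - T) v) \<le> \<gamma> * t) \<and>
      (\<forall>v\<in>Y - T. real (deg_in E S v) \<le> \<gamma> * t))"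

end

theory Submission
  imports Defs "HOL-Real_Asymp.Real_Asymp"
begin

lemma card_filter_sum: "finite A \<Longrightarrow> card {x\<in>A. P x} = (\<Sum>x\<in>A. if P x then 1 else (0::nat))"
  by (simp add: sum.If_cases Int_def conj_commute)

lemma double_count:
  assumes "finite P" "finite Q" "\<forall>u v. E u v \<longrightarrow> E v u"
  shows "(\<Sum>y\<in>Q. deg_in E P y) = (\<Sum>x\<in>P. deg_in E Q x)"
proof -
  have "(\<Sum>y\<in>Q. deg_in E P y) = (\<Sum>y\<in>Q. \<Sum>x\<in>P. if E y x then 1 else (0::nat))"
    unfolding deg_in_def using assms by (simp add: card_filter_sum)
  also have "\<dots> = (\<Sum>x\<in>P. \<Sum>y\<in>Q. if E y x then 1 else (0::nat))"
    by (rule sum.swap)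
  also have "\<dots> = (\<Sum>x\<in>P. \<Sum>y\<in>Q. if E x y then 1 else (0::nat))"
    using assms(3) by (intro sum.cong refl) (metis)
  also have "\<dots> = (\<Sum>x\<in>P. deg_in E Q x)"
    unfolding deg_in_def using assms by (simp add: card_filter_sum)
  finally show ?thesis .
qed

lemma graph_count:
  assumes bg: "bipartite_graph X Y E" and reg: "regular X Y E d" and AX: "A \<subseteq> X"
    and cont: "container X Y E d \<gamma> A S T"
  defines "N \<equiv> nbhd E A" and "C \<equiv> closure_set X E A"
  defines "tt \<equiv> real (card N) - real (card C)"
  shows "real (card (S - C) + card (N - T)) * (real d - \<gamma> * tt) \<le> real d * tt"
    and "C \<subseteq> S" "T \<subseteq> N" "finite S" "finite N"
proof -
  have fX: "finite X" and fY: "finite Y" and disj: "X \<inter> Y = {}"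
    and sym: "\<forall>u v. E u v \<longrightarrow> E v u"
    and bip: "\<forall>u v. E u v \<longrightarrow> (u \<in> X \<and> v \<in> Y) \<or> (u \<in> Y \<and> v \<in> X)"
    using bg unfolding bipartite_graph_def by auto
  have ct: "S \<subseteq> X" "T \<subseteq> Y" "C \<subseteq> S" "T \<subseteq> N"
    "\<forall>v\<in>S. real (deg_in E (Y - T) v) \<le> \<gamma> * tt"
    "\<forall>v\<in>Y - T. real (deg_in E S v) \<le> \<gamma> * tt"
    using cont unfolding container_def Let_def tt_def N_def C_def by auto
  show "C \<subseteq> S" "T \<subseteq> N" using ct by auto
  have NY: "N \<subseteq> Y" unfolding N_def nbhd_def using AX bip disj by blast
  have CX: "C \<subseteq> X" unfolding C_def closure_set_def by auto
  have fN: "finite N" using NY fY finite_subset by blast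
  show "finite S" "finite N" using fN ct(1) fX finite_subset by auto
  have fS: "finite S" using ct(1) fX finite_subset by blast
  have fC: "finite C" using CX fX finite_subset by blast
  have degY: "deg_in E X y = d" if "y \<in> Y" for y
  proof -
    have "{u\<in>X. E y u} = nbhd E {y}" unfolding nbhd_def using that bip disj by blast
    thus ?thesis using reg that unfolding regular_def deg_in_def by auto
  qed
  have degX: "deg_in E Y x = d" if "x \<in> X" for x
  proof -
    have "{u\<in>Y. E x u} = nbhd E {x}" unfolding nbhd_def using that bip disj by blast
    thus ?thesis using reg that unfolding regular_def deg_in_def by auto
  qed
  have splitX: "deg_in E T x + deg_in E (Y - T) x = d" if "x \<in> X" for x
  proof -
    have "{u\<in>Y. E x u} = {u\<in>T. E x u} \<union> {u\<in>Y - T. E x u}" using ct(2) by blast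
    moreover have "card ({u\<in>T. E x u} \<union> {u\<in>Y - T. E x u}) = card {u\<in>T. E x u} + card {u\<in>Y - T. E x u}"
      by (rule card_Un_disjoint) (use fY ct(2) in \<open>auto intro: finite_subset\<close>)
    ultimately show ?thesis using degX[OF that] unfolding deg_in_def by simp
  qed
  define R where "R = X - C"
  have splitY: "deg_in E C y + deg_in E R y = d" if "y \<in> Y" for y
  proof -
    have "{u\<in>X. E y u} = {u\<in>C. E y u} \<union> {u\<in>R. E y u}" using CX unfolding R_def by blast
    moreover have "card ({u\<in>C. E y u} \<union> {u\<in>R. E y u}) = card {u\<in>C. E y u} + card {u\<in>R. E y u}"
      by (rule card_Un_disjoint) (use fX CX in \<open>auto simp: R_def intro: finite_subset\<close>)
    ultimately show ?thesis using degY[OF that] unfolding deg_in_def by simp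
  qed
  have fR: "finite R" using fX R_def by simp
  have s1: "(\<Sum>y\<in>N. deg_in E C y) = d * card C"
  proof -
    have "(\<Sum>y\<in>N. deg_in E C y) = (\<Sum>x\<in>C. deg_in E N x)"
      by (rule double_count[OF fC fN sym])
    also have "\<dots> = (\<Sum>x\<in>C. d)"
    proof (rule sum.cong[OF refl])
      fix x assume x: "x \<in> C"
      have "{u\<in>N. E x u} = {u\<in>Y. E x u}"
        using x NY bip disj CX unfolding C_def closure_set_def N_def nbhd_def by blast
      thus "deg_in E N x = d" using degX x CX unfolding deg_in_def by auto
    qed
    finally show ?thesis by simp
  qed
  have s2: "(\<Sum>y\<in>N. deg_in E C y + deg_in E R y) = d * card N"
    using splitY NY by (simp add: subset_iff)
  have sR: "real (\<Sum>y\<in>N. deg_in E R y) = real d * tt"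
  proof -
    have "(\<Sum>y\<in>N. deg_in E C y) + (\<Sum>y\<in>N. deg_in E R y) = d * card N"
      using s2 by (simp add: sum.distrib)
    hence "real (d * card C) + real (\<Sum>y\<in>N. deg_in E R y) = real (d * card N)"
      using s1 by (metis of_nat_add)
    thus ?thesis unfolding tt_def by (simp add: algebra_simps)
  qed
  have Nsplit: "N = T \<union> (N - T)" using ct(4) by blast
  have sumsplit: "(\<Sum>y\<in>N. deg_in E R y) = (\<Sum>y\<in>T. deg_in E R y) + (\<Sum>y\<in>N - T. deg_in E R y)"
    using sum.subset_diff[OF ct(4) fN, of "deg_in E R"] by simp
  have fT: "finite T" using ct(4) fN finite_subset by blast
  have a1: "real (card (S - C)) * (real d - \<gamma> * tt) \<le> real (\<Sum>y\<in>T. deg_in E R y)"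
  proof -
    have "(\<Sum>y\<in>T. deg_in E (S - C) y) \<le> (\<Sum>y\<in>T. deg_in E R y)"
      unfolding deg_in_def R_def
      by (intro sum_mono card_mono) (use fX in auto, use ct(1) in blast)
    moreover have "(\<Sum>y\<in>T. deg_in E (S - C) y) = (\<Sum>x\<in>S - C. deg_in E T x)"
      by (rule double_count) (use fS fT sym in auto)
    moreover have "real (card (S - C)) * (real d - \<gamma> * tt) \<le> real (\<Sum>x\<in>S - C. deg_in E T x)"
    proof -
      have "(\<Sum>x\<in>S - C. real d - \<gamma> * tt) \<le> (\<Sum>x\<in>S - C. real (deg_in E T x))"
      proof (rule sum_mono)
        fix x assume x: "x \<in> S - C"
        have "real (deg_in E T x) + real (deg_in E (Y - T) x) = real d"
          using splitX[of x] x ct(1) by (metis DiffD1 of_nat_add subsetD)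
        thus "real d - \<gamma> * tt \<le> real (deg_in E T x)" using ct(5) x by force
      qed
      thus ?thesis by simp
    qed
    ultimately show ?thesis by linarith
  qed
  have a2: "real (card (N - T)) * (real d - \<gamma> * tt) \<le> real (\<Sum>y\<in>N - T. deg_in E R y)"
  proof -
    have "(\<Sum>y\<in>N - T. real d - \<gamma> * tt) \<le> (\<Sum>y\<in>N - T. real (deg_in E R y))"
    proof (rule sum_mono)
      fix y assume y: "y \<in> N - T"
      have yY: "y \<in> Y" using y NY by blast
      have "real (deg_in E C y) + real (deg_in E R y) = real d"
        using splitY[OF yY] by (metis of_nat_add)
      moreover have "deg_in E C y \<le> deg_in E S y"
        unfolding deg_in_def by (intro card_mono) (use fS ct(3) in auto)
      moreover have "real (deg_in E S y) \<le> \<gamma> * tt" using ct(6) y yY by blast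
      ultimately show "real d - \<gamma> * tt \<le> real (deg_in E R y)" by linarith
    qed
    thus ?thesis by simp
  qed
  show "real (card (S - C) + card (N - T)) * (real d - \<gamma> * tt) \<le> real d * tt"
    using a1 a2 sR sumsplit by (simp add: algebra_simps)
qed



lemma arith_key:
  fixes D g x L :: real and k :: nat and t :: int
  assumes h: "real k * (D - g*x) \<le> D * x" and xL: "x \<le> L" and gL: "g*L*(L+1) < D"
    and g: "0 < g" and xt: "x = real_of_int t" and L0: "0 \<le> L"
  shows "real k \<le> x"
proof -
  have "0 \<le> g*L*(L+1)" using g L0 by simp
  hence D: "0 < D" using gL by linarith
  show ?thesis
  proof (cases "x < 0")
    case True
    have "g*x < 0" using True g by (simp add: mult_pos_neg)
    hence "0 \<le> real k * (D - g*x)" using D by simp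
    moreover have "D * x < 0" using True D by (simp add: mult_pos_neg)
    ultimately show ?thesis using h by linarith
  next
    case False
    have "g*x*(x+1) \<le> g*L*(L+1)" using False xL g
      by (intro mult_mono mult_left_mono) auto
    hence lt: "g*x*(x+1) < D" using gL by linarith
    have gx: "g*x \<le> g*x*(x+1)" using False g by (simp add: algebra_simps)
    show ?thesis
    proof (rule ccontr)
      assume "\<not> real k \<le> x"
      hence "t < int k" using xt by linarith
      hence "x + 1 \<le> real k" using xt by linarith
      moreover have "0 \<le> D - g*x" using gx lt by linarith
      ultimately have "(x+1)*(D - g*x) \<le> real k * (D - g*x)" by (rule mult_right_mono)
      with h have "(x+1)*(D - g*x) \<le> D*x" by linarith
      thus False using lt by (simp add: algebra_simps)
    qed
  qed
qed

theorem mainTheorem12: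
  fixes \<delta> \<gamma> :: real
  assumes "0 < \<delta>" and "\<delta> < 1" and "0 < \<gamma>"
  shows "\<exists>N::nat. \<forall>n\<ge>N. \<forall>(X::nat set) Y E d w (t::int) A S T.
           bipartite_graph X Y E \<longrightarrow> card X = n \<longrightarrow> card Y = n \<longrightarrow>
           d = nat \<lfloor>\<delta> * real n\<rfloor> \<longrightarrow> regular X Y E d \<longrightarrow>
           real_of_int t \<le> (ln (real n)) ^ 4 \<longrightarrow>
           A \<in> polyfam X E w t \<longrightarrow>
           container X Y E d \<gamma> A S T \<longrightarrow>
           card S \<le> card T"
proof -
  have ev: "\<forall>\<^sub>F n in at_top. \<gamma> * (ln n ^ 4) * (ln n ^ 4 + 1) < \<delta> * n - 1"
    using assms(1) by real_asymp
  have "\<forall>\<^sub>F n in sequentially. \<gamma> * (ln (real n) ^ 4) * (ln (real n) ^ 4 + 1) < \<delta> * real n - 1"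
    using filterlim_real_sequentially ev by (rule filterlim_iff[THEN iffD1, rule_format])
  then obtain N0 where N0: "\<And>n. n \<ge> N0 \<Longrightarrow> \<gamma> * (ln (real n) ^ 4) * (ln (real n) ^ 4 + 1) < \<delta> * real n - 1"
    unfolding eventually_sequentially by blast
  show ?thesis
  proof (rule exI[of _ N0], intro allI impI)
    fix n and X :: "nat set" and Y E d w and t :: int and A S T
    assume n: "N0 \<le> n" and bg: "bipartite_graph X Y E" and "card X = n" "card Y = n"
      and dd: "d = nat \<lfloor>\<delta> * real n\<rfloor>" and reg: "regular X Y E d"
      and tL: "real_of_int t \<le> (ln (real n)) ^ 4"
      and Af: "A \<in> polyfam X E w t" and cont: "container X Y E d \<gamma> A S T"
    have AX: "A \<subseteq> X" and tdef: "int (card (nbhd E A)) - int (card (closure_set X E A)) = t"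
      using Af unfolding polyfam_def polymer_def by auto
    define N where "N = nbhd E A"
    define C where "C = closure_set X E A"
    note gc = graph_count[OF bg reg AX cont, folded N_def C_def]
    have xt: "real (card N) - real (card C) = real_of_int t"
      using tdef unfolding N_def C_def by (metis of_int_diff of_int_of_nat_eq)
    have dge: "\<delta> * real n - 1 < real d"
    proof -
      have "0 \<le> \<delta> * real n" using assms(1) by simp
      thus ?thesis unfolding dd by linarith
    qed
    have key: "real (card (S - C) + card (N - T)) \<le> real (card N) - real (card C)"
      apply (rule arith_key[OF gc(1), of "ln (real n) ^ 4" t])
      using tL xt N0[OF n] dge assms(3) by auto
    have cS: "card S = card C + card (S - C)"
      using gc(2,4) by (metis card_Diff_subset card_mono finite_subset le_add_diff_inverse)
    have cT: "card T + card (N - T) = card N"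
      using gc(3,5) by (metis card_Diff_subset card_mono finite_subset le_add_diff_inverse)
    show "card S \<le> card T" using key cS cT by linarith
  qed
qed

end
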